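(* Let $S=\{0,1,\dots,p-1\}$ with $p\ge 2$, let $m\ge 2$, and let $f:S^m\to S$ be a local rule. If there exists no pair of replaceable local configurations and no pair of periodic local configurations for $f$, then the global map $\tau$ is injective.
   Context: A local configuration is a finite word over $S$. For a word $w=w_1w_2\cdots w_n$ with $n\ge m$, its successor under $f$ is the word $\hat f(w)=u_1\cdots u_{n-m+1}$ with $u_j=f(w_j,w_{j+1},\dots,w_{j+m-1})$. For $k\le n$, $\mathrm{left}_k(w)=w_1\cdots w_k$ and $\mathrm{right}_k(w)=w_{n-k+1}\cdots w_n$. The global map is $\tau:S^{\mathbb Z}\to S^{\mathbb Z}$, $\tau(c)(i)=f(c(i-L),\dots,c(i+R))$ for fixed integers $L,R\ge 0$ with $L+1+R=m$; the CA is (globally) injective if $\tau$ is injective. Two local configurations $\alpha,\beta$ of the same length $n$ are replaceable if: $n\ge 2m-1$; $\alpha\ne\beta$; $\mathrm{left}_{m-1}(\alpha)=\mathrm{left}_{m-1}(\beta)$; $\mathrm{right}_{m-1}(\alpha)=\mathrm{right}_{m-1}(\beta)$; and $\hat f(\alpha)=\hat f(\beta)$. They are periodic if: $n\ge m$; $\alpha\ne\beta$; $\mathrm{left}_{m-1}(\alpha)=\mathrm{right}_{m-1}(\alpha)$; $\mathrm{left}_{m-1}(\beta)=\mathrm{right}_{m-1}(\beta)$; and $\hat f(\alpha)=\hat f(\beta)$. *)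

theory Defs
  imports Main
begin

(* Words over S = {0..<p} are lists of naturals with entries < p.
   A local rule f : S^m -> S is a function on lists, used only on lists of length m. *)

definition word :: "nat \<Rightarrow> nat list \<Rightarrow> bool" where
  "word p w \<longleftrightarrow> (\<forall>x\<in>set w. x < p)"

definition local_rule :: "nat \<Rightarrow> nat \<Rightarrow> (nat list \<Rightarrow> nat) \<Rightarrow> bool" where
  "local_rule p m f \<longleftrightarrow> (\<forall>w. length w = m \<and> word p w \<longrightarrow> f w < p)"

definition succ_word :: "nat \<Rightarrow> (nat list \<Rightarrow> nat) \<Rightarrow> nat list \<Rightarrow> nat list" where
  "succ_word m f w = map (\<lambda>j. f (take m (drop j w))) [0..<length w - m + 1]"

definition left_k :: "nat \<Rightarrow> 'a list \<Rightarrow> 'a list" where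
  "left_k k w = take k w"

definition right_k :: "nat \<Rightarrow> 'a list \<Rightarrow> 'a list" where
  "right_k k w = drop (length w - k) w"

definition replaceable :: "nat \<Rightarrow> nat \<Rightarrow> (nat list \<Rightarrow> nat) \<Rightarrow> nat list \<Rightarrow> nat list \<Rightarrow> bool" where
  "replaceable p m f \<alpha> \<beta> \<longleftrightarrow>
     word p \<alpha> \<and> word p \<beta> \<and> length \<alpha> = length \<beta> \<and>
     length \<alpha> \<ge> 2*m - 1 \<and> \<alpha> \<noteq> \<beta> \<and>
     left_k (m-1) \<alpha> = left_k (m-1) \<beta> \<and> right_k (m-1) \<alpha> = right_k (m-1) \<beta> \<and>
     succ_word m f \<alpha> = succ_word m f \<beta>"

definition periodic_pair :: "nat \<Rightarrow> nat \<Rightarrow> (nat list \<Rightarrow> nat) \<Rightarrow> nat list \<Rightarrow> nat list \<Rightarrow> bool" where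
  "periodic_pair p m f \<alpha> \<beta> \<longleftrightarrow>
     word p \<alpha> \<and> word p \<beta> \<and> length \<alpha> = length \<beta> \<and>
     length \<alpha> \<ge> m \<and> \<alpha> \<noteq> \<beta> \<and>
     left_k (m-1) \<alpha> = right_k (m-1) \<alpha> \<and> left_k (m-1) \<beta> = right_k (m-1) \<beta> \<and>
     succ_word m f \<alpha> = succ_word m f \<beta>"

definition config :: "nat \<Rightarrow> (int \<Rightarrow> nat) \<Rightarrow> bool" where
  "config p c \<longleftrightarrow> (\<forall>i. c i < p)"

(* global map: \<tau>(c)(i) = f(c(i-L), ..., c(i+R)), with m = L+1+R *)
definition global_map :: "nat \<Rightarrow> nat \<Rightarrow> (nat list \<Rightarrow> nat) \<Rightarrow> (int \<Rightarrow> nat) \<Rightarrow> int \<Rightarrow> nat" where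
  "global_map m L f c i = f (map (\<lambda>j. c (i - int L + int j)) [0..<m])"

end

theory Submission
  imports Defs
begin

definition seg :: "(int \<Rightarrow> nat) \<Rightarrow> int \<Rightarrow> nat \<Rightarrow> nat list" where
  "seg c a n = map (\<lambda>j. c (a + int j)) [0..<n]"

lemma seg_len[simp]: "length (seg c a n) = n"
  by (simp add: seg_def)

lemma seg_nth[simp]: "j < n \<Longrightarrow> seg c a n ! j = c (a + int j)"
  by (simp add: seg_def)

lemma seg_word: "config p c \<Longrightarrow> word p (seg c a n)"
  by (auto simp: word_def config_def seg_def)

lemma seg_left: "k \<le> n \<Longrightarrow> left_k k (seg c a n) = seg c a k"
  by (rule nth_equalityI) (auto simp: left_k_def)

lemma seg_right: "k \<le> n \<Longrightarrow> right_k k (seg c a n) = seg c (a + int (n-k)) k"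
  by (rule nth_equalityI) (auto simp: right_k_def nth_drop algebra_simps)

lemma seg_take_drop: "j + m \<le> n \<Longrightarrow> take m (drop j (seg c a n)) = seg c (a + int j) m"
  by (rule nth_equalityI) (auto simp: nth_drop algebra_simps)

lemma seg_succ:
  assumes "m \<le> n"
  shows "succ_word m f (seg c a n) = map (\<lambda>j. global_map m L f c (a + int j + int L)) [0..<n-m+1]"
proof (rule nth_equalityI)
  show "length (succ_word m f (seg c a n)) = length (map (\<lambda>j. global_map m L f c (a + int j + int L)) [0..<n-m+1])"
    by (simp add: succ_word_def)
next
  fix j assume "j < length (succ_word m f (seg c a n))"
  then have j: "j < n - m + 1" by (simp add: succ_word_def)
  then have "j + m \<le> n" using assms by linarith
  moreover have "global_map m L f c (a + int j + int L) = f (seg c (a + int j) m)"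
    by (simp add: global_map_def seg_def algebra_simps)
  ultimately show "succ_word m f (seg c a n) ! j = map (\<lambda>j. global_map m L f c (a + int j + int L)) [0..<n-m+1] ! j"
    using j by (simp add: succ_word_def seg_take_drop del: upt_Suc)
qed

lemma seg_neq:
  assumes "a \<le> k" "k < a + int n" "c k \<noteq> d k"
  shows "seg c a n \<noteq> seg d a n"
proof
  assume h: "seg c a n = seg d a n"
  have "nat (k - a) < n" using assms by linarith
  then have "seg c a n ! nat (k-a) = seg d a n ! nat (k-a)" using h by simp
  then show False using assms \<open>nat (k - a) < n\<close> by simp
qed

lemma pigeon:
  fixes h :: "nat \<Rightarrow> 'b"
  assumes "finite B" "\<And>n. h n \<in> B"
  shows "\<exists>a b. a < b \<and> h a = h b"
proof -
  have "\<not> inj h"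
  proof
    assume "inj h"
    then have "finite (UNIV :: nat set)"
      using finite_imageD[of h UNIV] finite_subset[of "range h" B] assms by auto
    then show False by simp
  qed
  then obtain a b where "a \<noteq> b" "h a = h b" unfolding inj_def by auto
  then show ?thesis by (metis linorder_neqE_nat)
qed

theorem lemma4:
  fixes p m L R :: nat and f :: "nat list \<Rightarrow> nat"
  assumes "p \<ge> 2" and "m \<ge> 2" and "L + 1 + R = m"
    and "local_rule p m f"
    and "\<not> (\<exists>\<alpha> \<beta>. replaceable p m f \<alpha> \<beta>)"
    and "\<not> (\<exists>\<alpha> \<beta>. periodic_pair p m f \<alpha> \<beta>)"
  shows "inj_on (global_map m L f) {c. config p c}"
proof (rule inj_onI)
  fix c d assume c: "c \<in> {c. config p c}" and d: "d \<in> {c. config p c}"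
    and eq: "global_map m L f c = global_map m L f d"
  have cc: "config p c" and dd: "config p d" using c d by auto
  define M where "M = m - 1"
  have mM: "m = M + 1" using assms(2) M_def by simp
  have m1: "m - 1 = M" using M_def by simp
  have succ_eq: "succ_word m f (seg c a n) = succ_word m f (seg d a n)" if "m \<le> n" for a n
    using seg_succ[OF that, of f c a L] seg_succ[OF that, of f d a L] eq by simp
  define B where "B = {xs. set xs \<subseteq> {..<p} \<and> length xs = M} \<times> {xs. set xs \<subseteq> {..<p} \<and> length xs = M}"
  have finB: "finite B" unfolding B_def by (intro finite_cartesian_product finite_lists_length_eq) auto
  define st where "st i = (seg c i M, seg d i M)" for i
  have stB: "st i \<in> B" for i
    using seg_word[OF cc, of i M] seg_word[OF dd, of i M]
    by (auto simp: st_def B_def word_def)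
  have diag: "seg c i M = seg d i M" if "i < j" "st i = st j" for i j
  proof (rule ccontr)
    assume ne: "seg c i M \<noteq> seg d i M"
    define n where "n = nat (j - i) + M"
    have nm: "m \<le> n" using that mM n_def by linarith
    have ij: "i + int (n - M) = j" using that n_def by simp
    have "periodic_pair p m f (seg c i n) (seg d i n)"
      unfolding periodic_pair_def
    proof (intro conjI)
      show "seg c i n \<noteq> seg d i n"
      proof
        assume "seg c i n = seg d i n"
        then have "left_k M (seg c i n) = left_k M (seg d i n)" by simp
        then show False using ne seg_left[of M n c i] seg_left[of M n d i] n_def by simp
      qed
      show "left_k (m - 1) (seg c i n) = right_k (m - 1) (seg c i n)"
        using seg_left[of M n c i] seg_right[of M n c i] n_def ij that(2)
        unfolding m1 by (simp add: st_def)
      show "left_k (m - 1) (seg d i n) = right_k (m - 1) (seg d i n)"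
        using seg_left[of M n d i] seg_right[of M n d i] n_def ij that(2)
        unfolding m1 by (simp add: st_def)
    qed (use nm succ_eq seg_word cc dd in auto)
    then show False using assms(6) by blast
  qed
  show "c = d"
  proof (rule ccontr)
    assume "c \<noteq> d"
    then obtain k where k: "c k \<noteq> d k" by auto
    obtain a1 b1 where ab1: "a1 < b1" "st (k - int M - 1 - int a1) = st (k - int M - 1 - int b1)"
      using pigeon[OF finB, of "\<lambda>n. st (k - int M - 1 - int n)"] stB by blast
    define i1 where "i1 = k - int M - 1 - int b1"
    have d1: "seg c i1 M = seg d i1 M"
      using diag[of i1 "k - int M - 1 - int a1"] ab1 unfolding i1_def by simp
    have i1k: "i1 + int M < k" using i1_def by simp
    obtain a2 b2 where ab2: "a2 < b2" "st (k + 1 + int a2) = st (k + 1 + int b2)"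
      using pigeon[OF finB, of "\<lambda>n. st (k + 1 + int n)"] stB by blast
    define i2 where "i2 = k + 1 + int a2"
    have d2: "seg c i2 M = seg d i2 M"
      using diag[of i2 "k + 1 + int b2"] ab2 unfolding i2_def by simp
    have i2k: "k < i2" using i2_def by simp
    define n where "n = nat (i2 - i1) + M"
    have nm: "2 * m - 1 \<le> n" using i1k i2k mM n_def by linarith
    have nM: "M \<le> n" using n_def by simp
    have ij: "i1 + int (n - M) = i2" using i1k i2k n_def by simp
    have "replaceable p m f (seg c i1 n) (seg d i1 n)"
      unfolding replaceable_def
    proof (intro conjI)
      show "seg c i1 n \<noteq> seg d i1 n"
        by (rule seg_neq[of i1 k n c d]) (use i1k i2k n_def k in linarith)+
      show "left_k (m - 1) (seg c i1 n) = left_k (m - 1) (seg d i1 n)"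
        using seg_left[OF nM, of c i1] seg_left[OF nM, of d i1] d1 unfolding m1 by simp
      show "right_k (m - 1) (seg c i1 n) = right_k (m - 1) (seg d i1 n)"
        using seg_right[OF nM, of c i1] seg_right[OF nM, of d i1] d2 ij unfolding m1 by simp
      show "succ_word m f (seg c i1 n) = succ_word m f (seg d i1 n)"
        using succ_eq nm mM by simp
    qed (use nm seg_word cc dd in auto)
    then show False using assms(5) by blast
  qed
qed

end
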